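(* Let $d\ge 1$, $r\in(0,+\infty)$, let $\|\cdot\|$ be a norm on $\mathbb{R}^d$ and let $P$ be a Borel probability measure on $\mathbb{R}^d$ with $\int\|x\|^r\,dP(x)<+\infty$. Let $(a_n)_{n\ge1}$ be an $L^r$-optimal greedy quantization sequence for $P$ and $a^{(n)}=\{a_1,\dots,a_n\}$. Then, for every probability distribution $\nu$ on $(\mathbb{R}^d,\mathcal{B}(\mathbb{R}^d))$, every $c\in(0,\tfrac12)$ and every $n\ge1$, $$e_r(a^{(n)},P)^r-e_r(a^{(n+1)},P)^r\ \ge\ \frac{(1-c)^r-c^r}{(c+1)^r}\int \nu\Big(B\Big(x,\tfrac{c}{c+1}\,d(x,a^{(n)})\Big)\Big)\,d(x,a^{(n)})^r\,dP(x).$$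
   Context: For a finite nonempty set $\Gamma\subset\mathbb{R}^d$ and $x\in\mathbb{R}^d$, $d(x,\Gamma)=\min_{a\in\Gamma}\|x-a\|$ and $e_r(\Gamma,P)=\big(\int d(x,\Gamma)^r\,dP(x)\big)^{1/r}$. An $L^r$-optimal greedy quantization sequence for $P$ is a sequence $(a_n)_{n\ge1}$ in $\mathbb{R}^d$ such that, with $a^{(0)}=\varnothing$ and $a^{(n)}=\{a_1,\dots,a_n\}$, for every $n\ge0$, $a_{n+1}\in\operatorname{argmin}_{\xi\in\mathbb{R}^d} e_r(a^{(n)}\cup\{\xi\},P)$ (so $a_1$ is an $L^r$-median of $P$, i.e. a minimizer of $\xi\mapsto e_r(\{\xi\},P)$). $B(x,t)=\{y\in\mathbb{R}^d:\|y-x\|\le t\}$. *)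

theory Defs
  imports "HOL-Analysis.Analysis" "HOL-Probability.Probability"
begin

definition is_norm :: "('a::real_vector \<Rightarrow> real) \<Rightarrow> bool" where
  "is_norm N \<longleftrightarrow> (\<forall>x. 0 \<le> N x) \<and> (\<forall>x. N x = 0 \<longleftrightarrow> x = 0)
     \<and> (\<forall>x y. N (x + y) \<le> N x + N y) \<and> (\<forall>c x. N (c *\<^sub>R x) = \<bar>c\<bar> * N x)"

definition setdist_N :: "('a::real_vector \<Rightarrow> real) \<Rightarrow> 'a \<Rightarrow> 'a set \<Rightarrow> real" where
  "setdist_N N x \<Gamma> = Min ((\<lambda>a. N (x - a)) ` \<Gamma>)"

definition cball_N :: "('a::real_vector \<Rightarrow> real) \<Rightarrow> 'a \<Rightarrow> real \<Rightarrow> 'a set" where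
  "cball_N N x t = {y. N (y - x) \<le> t}"

definition quant_err :: "('a::real_vector \<Rightarrow> real) \<Rightarrow> real \<Rightarrow> 'a set \<Rightarrow> 'a measure \<Rightarrow> real" where
  "quant_err N r \<Gamma> P = (\<integral>x. setdist_N N x \<Gamma> powr r \<partial>P) powr (1 / r)"

text \<open>L^r-optimal greedy quantization sequence (indexed from 1; a^(n) = a ` {1..n}).\<close>
definition greedy_seq :: "('a::real_vector \<Rightarrow> real) \<Rightarrow> real \<Rightarrow> 'a measure \<Rightarrow> (nat \<Rightarrow> 'a) \<Rightarrow> bool" where
  "greedy_seq N r P a \<longleftrightarrow> (\<forall>n::nat. \<forall>\<xi>.
      quant_err N r (insert (a (Suc n)) (a ` {1..n})) P \<le> quant_err N r (insert \<xi> (a ` {1..n})) P)"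

end

theory Submission
  imports Defs
begin

lemma normN_sum:
  assumes "is_norm N" "finite S"
  shows "N (sum f S) \<le> (\<Sum>i\<in>S. N (f i))"
  using assms(2)
proof (induction S rule: finite_induct)
  case empty
  have "N 0 = 0" using assms(1) unfolding is_norm_def by blast
  then show ?case by simp
next
  case (insert x F)
  have "N (f x + sum f F) \<le> N (f x) + N (sum f F)" using assms(1) unfolding is_norm_def by blast
  then show ?case using insert by simp
qed

lemma normN_bound:
  fixes N :: "'a::euclidean_space \<Rightarrow> real"
  assumes "is_norm N"
  shows "\<exists>C. \<forall>x. N x \<le> C * norm x"
proof -
  have "N x \<le> (\<Sum>b\<in>Basis. N b) * norm x" for x
  proof -
    have "N x = N (\<Sum>b\<in>Basis. (x \<bullet> b) *\<^sub>R b)" by (simp add: euclidean_representation)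
    also have "\<dots> \<le> (\<Sum>b\<in>Basis. N ((x \<bullet> b) *\<^sub>R b))" by (rule normN_sum[OF assms]) simp
    also have "\<dots> = (\<Sum>b\<in>Basis. \<bar>x \<bullet> b\<bar> * N b)" using assms unfolding is_norm_def by simp
    also have "\<dots> \<le> (\<Sum>b\<in>Basis. norm x * N b)"
      apply (rule sum_mono) apply (rule mult_right_mono)
      using Basis_le_norm assms unfolding is_norm_def by auto
    also have "\<dots> = (\<Sum>b\<in>Basis. N b) * norm x" by (simp add: sum_distrib_left mult.commute)
    finally show ?thesis .
  qed
  then show ?thesis by blast
qed

lemma normN_minus:
  assumes "is_norm N" shows "N (x - y) = N (y - x)"
proof -
  have "N (x - y) = N ((-1) *\<^sub>R (y - x))" by simp
  also have "\<dots> = \<bar>-1\<bar> * N (y - x)" using assms unfolding is_norm_def by blast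
  also have "\<dots> = N (y - x)" by simp
  finally show ?thesis .
qed

lemma normN_cont:
  fixes N :: "'a::euclidean_space \<Rightarrow> real"
  assumes "is_norm N"
  shows "continuous_on UNIV N"
proof -
  obtain C where C: "\<And>x. N x \<le> C * norm x" using normN_bound[OF assms] by blast
  have "\<bar>N x - N y\<bar> \<le> N (x - y)" for x y
  proof -
    have "N x \<le> N (x - y) + N y" using assms unfolding is_norm_def by (metis diff_add_cancel)
    moreover have "N y \<le> N (y - x) + N x" using assms unfolding is_norm_def by (metis diff_add_cancel)
    ultimately show ?thesis using normN_minus[OF assms, of x y] by linarith
  qed
  then have L: "\<bar>N x - N y\<bar> \<le> C * norm (x - y)" for x y using C order_trans by blast
  show ?thesis
    unfolding continuous_on_iff
  proof (intro ballI allI impI)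
    fix x and e :: real assume "e > 0"
    show "\<exists>d>0. \<forall>x'\<in>UNIV. dist x' x < d \<longrightarrow> dist (N x') (N x) < e"
    proof (intro exI[of _ "e / (\<bar>C\<bar> + 1)"] conjI ballI impI)
      show "e / (\<bar>C\<bar> + 1) > 0" using \<open>e>0\<close> by simp
      fix x' assume "dist x' x < e / (\<bar>C\<bar> + 1)"
      then have "norm (x' - x) * (\<bar>C\<bar> + 1) < e" by (simp add: dist_norm field_simps)
      moreover have "\<bar>N x' - N x\<bar> \<le> (\<bar>C\<bar> + 1) * norm (x' - x)"
        using L[of x' x] by (smt (verit) mult_right_mono norm_ge_zero)
      ultimately show "dist (N x') (N x) < e" by (simp add: dist_real_def mult.commute)
    qed
  qed
qed

lemma sd_facts:
  assumes "finite G" "G \<noteq> {}" "is_norm N"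
  shows "0 \<le> setdist_N N x G" and "g \<in> G \<Longrightarrow> setdist_N N x G \<le> N (x - g)"
    and "setdist_N N x (insert \<xi> G) = min (N (x - \<xi>)) (setdist_N N x G)"
proof -
  have "setdist_N N x G \<in> (\<lambda>a. N (x - a)) ` G" unfolding setdist_N_def
    using assms by (intro Min_in) auto
  then show "0 \<le> setdist_N N x G" using assms(3) unfolding is_norm_def by auto
  show "g \<in> G \<Longrightarrow> setdist_N N x G \<le> N (x - g)" unfolding setdist_N_def
    using assms by (intro Min_le) auto
  show "setdist_N N x (insert \<xi> G) = min (N (x - \<xi>)) (setdist_N N x G)"
    unfolding setdist_N_def using assms by simp
qed

lemma N_meas:
  fixes N :: "'a::euclidean_space \<Rightarrow> real"
  assumes "is_norm N" shows "N \<in> borel_measurable borel"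
  using normN_cont[OF assms] by (rule borel_measurable_continuous_onI)

lemma sd_meas:
  fixes N :: "'a::euclidean_space \<Rightarrow> real"
  assumes "is_norm N" "finite G"
  shows "(\<lambda>x. setdist_N N x G) \<in> borel_measurable borel"
proof -
  note [measurable] = N_meas[OF assms(1)]
  show ?thesis unfolding setdist_N_def using assms(2) by measurable
qed

lemma powr_add_le:
  fixes u v r :: real assumes "0 \<le> u" "0 \<le> v" "0 < r"
  shows "(u + v) powr r \<le> 2 powr r * (u powr r + v powr r)"
proof -
  have "(u + v) powr r \<le> (2 * max u v) powr r"
    using assms by (intro powr_mono2) auto
  also have "\<dots> = 2 powr r * max u v powr r" using assms by (simp add: powr_mult)
  also have "max u v powr r \<le> u powr r + v powr r"
    by (cases "u \<le> v") (auto simp: max_def)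
  then have "2 powr r * max u v powr r \<le> 2 powr r * (u powr r + v powr r)"
    by (intro mult_left_mono) auto
  finally show ?thesis .
qed

lemma sd_int:
  fixes N :: "'a::euclidean_space \<Rightarrow> real"
  assumes "is_norm N" "finite G" "G \<noteq> {}" "0 < r" "prob_space P" "sets P = sets borel"
    and "(\<integral>\<^sup>+ x. ennreal (N x powr r) \<partial>P) < \<infinity>"
  shows "integrable P (\<lambda>x. setdist_N N x G powr r)"
proof -
  have mP: "borel_measurable P = borel_measurable borel"
    using assms(6) by (intro measurable_cong_sets) auto
  note [measurable] = N_meas[OF assms(1)] sd_meas[OF assms(1,2)]
  obtain g where g: "g \<in> G" using assms(3) by blast
  have iN: "integrable P (\<lambda>x. N x powr r)"
  proof (rule integrableI_bounded)
    show "(\<lambda>x. N x powr r) \<in> borel_measurable P" unfolding mP by measurable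
    show "(\<integral>\<^sup>+ x. ennreal (norm (N x powr r)) \<partial>P) < \<infinity>" using assms(7) by simp
  qed
  have fm: "finite_measure P" using assms(5) by (simp add: prob_space_def)
  show ?thesis
  proof (rule Bochner_Integration.integrable_bound[where f="\<lambda>x. 2 powr r * (N x powr r + N g powr r)"])
    show "integrable P (\<lambda>x. 2 powr r * (N x powr r + N g powr r))"
      by (rule integrable_mult_right, rule Bochner_Integration.integrable_add, rule iN, rule finite_measure.integrable_const[OF fm])
    show "(\<lambda>x. setdist_N N x G powr r) \<in> borel_measurable P" unfolding mP by measurable
    show "AE x in P. norm (setdist_N N x G powr r) \<le> norm (2 powr r * (N x powr r + N g powr r))"
    proof (rule AE_I2)
      fix x
      have N0: "0 \<le> N y" for y using assms(1) unfolding is_norm_def by blast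
      have "setdist_N N x G \<le> N (x - g)" using sd_facts(2)[OF assms(2,3,1) g] .
      also have "N (x - g) \<le> N x + N g"
      proof -
        have "N (x - g) = N (x + (-g))" by simp
        also have "\<dots> \<le> N x + N (-g)" using assms(1) unfolding is_norm_def by blast
        also have "N (-g) = N (0 - g)" by simp
        also have "\<dots> = N g" using normN_minus[OF assms(1), of 0 g] by simp
        finally show ?thesis .
      qed
      finally have "setdist_N N x G powr r \<le> (N x + N g) powr r"
        using sd_facts(1)[OF assms(2,3,1)] assms(4) by (intro powr_mono2) auto
      also have "\<dots> \<le> 2 powr r * (N x powr r + N g powr r)"
        using powr_add_le[OF N0 N0 assms(4)] .
      finally show "norm (setdist_N N x G powr r) \<le> norm (2 powr r * (N x powr r + N g powr r))" by simp
    qed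
  qed
qed

theorem proposition2p1:
  fixes N :: "'a::euclidean_space \<Rightarrow> real"
    and r :: real and P \<nu> :: "'a measure" and a :: "nat \<Rightarrow> 'a"
  assumes "is_norm N" and "0 < r"
    and "prob_space P" and "sets P = sets borel"
    and "(\<integral>\<^sup>+ x. ennreal (N x powr r) \<partial>P) < \<infinity>"
    and "greedy_seq N r P a"
    and "prob_space \<nu>" and "sets \<nu> = sets borel"
    and "0 < c" and "c < 1 / 2"
    and "1 \<le> n"
  shows "quant_err N r (a ` {1..n}) P powr r - quant_err N r (a ` {1..Suc n}) P powr r
     \<ge> ((1 - c) powr r - c powr r) / (c + 1) powr r *
        (\<integral>x. measure \<nu> (cball_N N x (c / (c + 1) * setdist_N N x (a ` {1..n})))
               * setdist_N N x (a ` {1..n}) powr r \<partial>P)"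
proof -
  note nN = assms(1)
  define G where "G = a ` {1..n}"
  have Gf: "finite G" and Gne: "G \<noteq> {}" using assms(11) unfolding G_def by auto
  define D where "D x = setdist_N N x G" for x
  define \<rho> where "\<rho> = c / (c + 1)"
  define K' where "K' = 1 - \<rho> powr r"
  define E where "E H = (\<integral>x. setdist_N N x H powr r \<partial>P)" for H
  define h where "h \<xi> x = (if N (\<xi> - x) \<le> \<rho> * D x then D x powr r else 0)" for \<xi> x
  interpret P: prob_space P by fact
  interpret V: prob_space \<nu> by fact
  interpret PV: pair_sigma_finite P \<nu> by unfold_locales
  have mP: "borel_measurable P = borel_measurable borel"
    using assms(4) by (intro measurable_cong_sets) auto
  have mV: "borel_measurable \<nu> = borel_measurable borel"
    using assms(8) by (intro measurable_cong_sets) auto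
  have mPV: "borel_measurable (P \<Otimes>\<^sub>M \<nu>) = borel_measurable (borel \<Otimes>\<^sub>M borel)"
    using assms(4,8) by (intro measurable_cong_sets sets_pair_measure_cong) auto
  note [measurable] = N_meas[OF nN]
  have Dm[measurable]: "D \<in> borel_measurable borel" unfolding D_def using sd_meas[OF nN Gf] .
  have D0: "0 \<le> D x" for x unfolding D_def using sd_facts(1)[OF Gf Gne nN] .
  have N0: "0 \<le> N x" for x using nN unfolding is_norm_def by blast
  have \<rho>0: "0 \<le> \<rho>" "\<rho> < 1" using assms(9) unfolding \<rho>_def by auto
  have K'0: "0 \<le> K'" unfolding K'_def
    using powr_mono2[of r \<rho> 1] \<rho>0 assms(2) by auto
  have hm: "(\<lambda>(x, \<xi>). ennreal (h \<xi> x)) \<in> borel_measurable (P \<Otimes>\<^sub>M \<nu>)"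
    unfolding mPV h_def by measurable
  have h0: "0 \<le> h \<xi> x" for \<xi> x unfolding h_def by auto
  have hle: "h \<xi> x \<le> D x powr r" for \<xi> x unfolding h_def by auto
  have intE: "integrable P (\<lambda>x. setdist_N N x H powr r)" if "finite H" "H \<noteq> {}" for H
    using sd_int[OF nN that assms(2,3,4,5)] .
  have qe: "quant_err N r H P powr r = E H" if "finite H" "H \<noteq> {}" for H
  proof -
    have "0 \<le> E H" unfolding E_def by (rule Bochner_Integration.integral_nonneg) simp
    then show ?thesis unfolding quant_err_def E_def[symmetric] powr_powr
      using assms(2) by simp
  qed
  have Suc: "a ` {1..Suc n} = insert (a (Suc n)) G" unfolding G_def
    using assms(11) by (auto simp: atLeastAtMostSuc_conv)
  define \<Delta> where "\<Delta> = E G - E (insert (a (Suc n)) G)"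
  have LHS: "quant_err N r (a ` {1..n}) P powr r - quant_err N r (a ` {1..Suc n}) P powr r = \<Delta>"
    unfolding \<Delta>_def Suc using qe Gf Gne unfolding G_def by simp
  have pw: "K' * h \<xi> x \<le> D x powr r - setdist_N N x (insert \<xi> G) powr r" for \<xi> x
  proof -
    have ins: "setdist_N N x (insert \<xi> G) = min (N (x - \<xi>)) (D x)"
      unfolding D_def using sd_facts(3)[OF Gf Gne nN] .
    show ?thesis
    proof (cases "N (\<xi> - x) \<le> \<rho> * D x")
      case True
      have "setdist_N N x (insert \<xi> G) \<le> \<rho> * D x"
        using True normN_minus[OF nN, of x \<xi>] unfolding ins by simp
      then have "setdist_N N x (insert \<xi> G) powr r \<le> (\<rho> * D x) powr r"
        using ins N0 D0 assms(2) by (intro powr_mono2) auto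
      also have "\<dots> = \<rho> powr r * D x powr r" using \<rho>0 D0 by (simp add: powr_mult)
      finally show ?thesis using True unfolding h_def K'_def by (simp add: algebra_simps)
    next
      case False
      have "setdist_N N x (insert \<xi> G) powr r \<le> D x powr r"
        using ins N0 D0 assms(2) by (intro powr_mono2) auto
      then show ?thesis using False unfolding h_def by simp
    qed
  qed
  have intD: "integrable P (\<lambda>x. D x powr r)" unfolding D_def using intE[OF Gf Gne] .
  have ih: "integrable P (h \<xi>)" for \<xi>
  proof (rule Bochner_Integration.integrable_bound[where f="\<lambda>x. D x powr r"])
    show "integrable P (\<lambda>x. D x powr r)" using intD .
    show "h \<xi> \<in> borel_measurable P" unfolding mP h_def by measurable
    show "AE x in P. norm (h \<xi> x) \<le> norm (D x powr r)" using h0 hle by simp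
  qed
  have step: "K' * (\<integral>x. h \<xi> x \<partial>P) \<le> \<Delta>" for \<xi>
  proof -
    have "E (insert (a (Suc n)) G) \<le> E (insert \<xi> G)"
    proof -
      have "quant_err N r (insert (a (Suc n)) G) P \<le> quant_err N r (insert \<xi> G) P"
        using assms(6) unfolding greedy_seq_def G_def by blast
      then have "quant_err N r (insert (a (Suc n)) G) P powr r \<le> quant_err N r (insert \<xi> G) P powr r"
        using assms(2) by (intro powr_mono2) (auto simp: quant_err_def)
      then show ?thesis using qe Gf Gne by simp
    qed
    then have "E G - E (insert \<xi> G) \<le> \<Delta>" unfolding \<Delta>_def by simp
    moreover have "E G - E (insert \<xi> G) = (\<integral>x. D x powr r - setdist_N N x (insert \<xi> G) powr r \<partial>P)"
      unfolding E_def D_def using intE Gf Gne by (subst Bochner_Integration.integral_diff) auto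
    moreover have "(\<integral>x. K' * h \<xi> x \<partial>P) \<le> (\<integral>x. D x powr r - setdist_N N x (insert \<xi> G) powr r \<partial>P)"
      using pw ih intE[OF Gf Gne] intE[of "insert \<xi> G"] Gf unfolding D_def
      by (intro integral_mono) auto
    ultimately show ?thesis by simp
  qed
  have \<Delta>0: "0 \<le> \<Delta>"
    using step[of 0] K'0 h0 by (meson Bochner_Integration.integral_nonneg mult_nonneg_nonneg order_trans)
  have A: "ennreal K' * (\<integral>\<^sup>+x. ennreal (h \<xi> x) \<partial>P) \<le> ennreal \<Delta>" for \<xi>
  proof -
    have "(\<integral>\<^sup>+x. ennreal (h \<xi> x) \<partial>P) = ennreal (\<integral>x. h \<xi> x \<partial>P)"
      using ih h0 by (intro nn_integral_eq_integral) auto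
    then have "ennreal K' * (\<integral>\<^sup>+x. ennreal (h \<xi> x) \<partial>P) = ennreal (K' * (\<integral>x. h \<xi> x \<partial>P))"
      using K'0 by (simp add: ennreal_mult')
    also have "\<dots> \<le> ennreal \<Delta>" using step by (intro ennreal_leI)
    finally show ?thesis .
  qed
  define A where "A x = cball_N N x (\<rho> * D x)" for x
  have Asets: "A x \<in> sets \<nu>" for x
  proof -
    have "A x = {y \<in> space borel. N (y - x) \<le> \<rho> * D x}" unfolding A_def cball_N_def by simp
    also have "\<dots> \<in> sets borel" by measurable
    finally show ?thesis using assms(8) by simp
  qed
  have hm2: "(\<lambda>(\<xi>, x). ennreal (h \<xi> x)) \<in> borel_measurable (\<nu> \<Otimes>\<^sub>M P)"
  proof -
    have e: "borel_measurable (\<nu> \<Otimes>\<^sub>M P) = borel_measurable (borel \<Otimes>\<^sub>M borel)"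
      using assms(4,8) by (intro measurable_cong_sets sets_pair_measure_cong) auto
    show ?thesis unfolding h_def e by measurable
  qed
  define m where "m x = measure \<nu> (A x)" for x
  have m_eq: "m x = enn2real (\<integral>\<^sup>+\<xi>. (if N (\<xi> - x) \<le> \<rho> * D x then 1 else 0) \<partial>\<nu>)" for x
  proof -
    have "(\<integral>\<^sup>+\<xi>. (if N (\<xi> - x) \<le> \<rho> * D x then 1 else 0) \<partial>\<nu>) = (\<integral>\<^sup>+\<xi>. indicator (A x) \<xi> \<partial>\<nu>)"
      unfolding A_def cball_N_def by (intro nn_integral_cong) (auto simp: indicator_def)
    also have "\<dots> = emeasure \<nu> (A x)" using Asets by simp
    finally show ?thesis unfolding m_def by (simp add: V.emeasure_eq_measure)
  qed
  have mm: "m \<in> borel_measurable P"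
  proof -
    have "(\<lambda>(x, \<xi>). (if N (\<xi> - x) \<le> \<rho> * D x then 1 else 0) :: ennreal) \<in> borel_measurable (P \<Otimes>\<^sub>M \<nu>)"
      unfolding mPV by measurable
    then have "(\<lambda>x. \<integral>\<^sup>+\<xi>. (if N (\<xi> - x) \<le> \<rho> * D x then 1 else 0) \<partial>\<nu>) \<in> borel_measurable P"
      by (intro sigma_finite_measure.borel_measurable_nn_integral) (auto intro: V.sigma_finite_measure_axioms)
    then show ?thesis unfolding m_eq[abs_def] by measurable
  qed
  have m0: "0 \<le> m x" "m x \<le> 1" for x unfolding m_def by auto
  define I where "I = (\<integral>x. m x * D x powr r \<partial>P)"
  have intm: "integrable P (\<lambda>x. m x * D x powr r)"
  proof (rule Bochner_Integration.integrable_bound[where f="\<lambda>x. D x powr r"])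
    show "integrable P (\<lambda>x. D x powr r)" using intD .
    show "(\<lambda>x. m x * D x powr r) \<in> borel_measurable P" using mm unfolding mP by measurable
    show "AE x in P. norm (m x * D x powr r) \<le> norm (D x powr r)"
      using m0 by (intro AE_I2) (simp add: abs_mult mult_left_le_one_le)
  qed
  have I0: "0 \<le> I" unfolding I_def using m0 by (intro Bochner_Integration.integral_nonneg) simp
  have inner: "(\<integral>\<^sup>+\<xi>. ennreal (h \<xi> x) \<partial>\<nu>) = ennreal (m x * D x powr r)" for x
  proof -
    have "(\<integral>\<^sup>+\<xi>. ennreal (h \<xi> x) \<partial>\<nu>) = (\<integral>\<^sup>+\<xi>. ennreal (D x powr r) * indicator (A x) \<xi> \<partial>\<nu>)"
      unfolding h_def A_def cball_N_def by (intro nn_integral_cong) (auto simp: indicator_def)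
    also have "\<dots> = ennreal (D x powr r) * emeasure \<nu> (A x)"
      using Asets by (simp add: nn_integral_cmult_indicator)
    also have "\<dots> = ennreal (m x * D x powr r)"
      unfolding m_def V.emeasure_eq_measure using m0 by (simp add: ennreal_mult' mult.commute)
    finally show ?thesis .
  qed
  have "ennreal \<Delta> = (\<integral>\<^sup>+\<xi>. ennreal \<Delta> \<partial>\<nu>)" by (simp add: V.emeasure_space_1)
  also have "\<dots> \<ge> (\<integral>\<^sup>+\<xi>. ennreal K' * (\<integral>\<^sup>+x. ennreal (h \<xi> x) \<partial>P) \<partial>\<nu>)"
    using A by (intro nn_integral_mono) auto
  also have "(\<integral>\<^sup>+\<xi>. ennreal K' * (\<integral>\<^sup>+x. ennreal (h \<xi> x) \<partial>P) \<partial>\<nu>)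
      = ennreal K' * (\<integral>\<^sup>+\<xi>. (\<integral>\<^sup>+x. ennreal (h \<xi> x) \<partial>P) \<partial>\<nu>)"
    using hm2 by (intro nn_integral_cmult sigma_finite_measure.borel_measurable_nn_integral)
      (auto intro: P.sigma_finite_measure_axioms)
  also have "(\<integral>\<^sup>+\<xi>. (\<integral>\<^sup>+x. ennreal (h \<xi> x) \<partial>P) \<partial>\<nu>) = (\<integral>\<^sup>+x. (\<integral>\<^sup>+\<xi>. ennreal (h \<xi> x) \<partial>\<nu>) \<partial>P)"
    using PV.Fubini'[of "\<lambda>x \<xi>. ennreal (h \<xi> x)"] hm by simp
  also have "\<dots> = (\<integral>\<^sup>+x. ennreal (m x * D x powr r) \<partial>P)" by (simp add: inner)
  also have "\<dots> = ennreal I" unfolding I_def using intm m0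
    by (intro nn_integral_eq_integral) auto
  finally have "ennreal K' * ennreal I \<le> ennreal \<Delta>" .
  then have "ennreal (K' * I) \<le> ennreal \<Delta>" using K'0 by (simp add: ennreal_mult')
  then have KI: "K' * I \<le> \<Delta>" using \<Delta>0 by (simp add: ennreal_le_iff)
  define K where "K = ((1 - c) powr r - c powr r) / (c + 1) powr r"
  have "K \<le> K'"
  proof -
    have cp: "0 < (c + 1) powr r" using assms(9) by simp
    have "(1 - c) powr r \<le> (c + 1) powr r" using assms(2,9,10) by (intro powr_mono2) auto
    then have "K \<le> ((c + 1) powr r - c powr r) / (c + 1) powr r" unfolding K_def
      using cp by (intro divide_right_mono) auto
    also have "\<dots> = K'" unfolding K'_def \<rho>_def using cp assms(9)
      by (simp add: powr_divide diff_divide_distrib)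
    finally show ?thesis .
  qed
  then have "K * I \<le> \<Delta>" using KI I0 by (meson mult_right_mono order_trans)
  moreover have "(\<integral>x. measure \<nu> (cball_N N x (c / (c + 1) * setdist_N N x (a ` {1..n})))
               * setdist_N N x (a ` {1..n}) powr r \<partial>P) = I"
    unfolding I_def m_def A_def D_def G_def \<rho>_def ..
  ultimately show ?thesis unfolding LHS K_def by simp
qed
end
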